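(* Let $R>1$ and fix $(t_0,x_0)$ with $t_0\ge0$, $t_0+|x_0|\le R$; write $r_0=|x_0|$, $v_0=R-t_0-r_0$. For $0\le\tilde r\le t_0$ let $t=t_0-\tilde r$ and for $\tilde\omega\in\mathbb{S}^2$ let $r=|x_0+\tilde r\tilde\omega|$. Then for every $\gamma'<1$, \[ \int_{\mathbb{S}^2}(R-t-r)^{-\gamma'}\,d\tilde\omega\le C(R-t)^{\gamma'}(R-t_0)^{-\gamma'}(v_0+\tilde r)^{-\gamma'} \] for some constant $C$ depending only on $\gamma'$ and $R$. *)

theory Defs
  imports "HOL-Analysis.Analysis"
begin

definition S2pt :: "real \<Rightarrow> real \<Rightarrow> real^3" where
  "S2pt th ph = vector [sin th * cos ph, sin th * sin ph, cos th]"

text \<open>Integral of a nonnegative function over S^2 w.r.t. the standard surface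
  measure d omega = sin th dth dph, as an extended nonnegative real.\<close>
definition sphere_nn_integral :: "(real^3 \<Rightarrow> real) \<Rightarrow> ennreal" where
  "sphere_nn_integral f =
     (\<integral>\<^sup>+ th. \<integral>\<^sup>+ ph. ennreal (f (S2pt th ph) * sin th)
          * indicator {0..pi} th * indicator {0..2*pi} ph \<partial>lborel \<partial>lborel)"

end

theory Submission
  imports Defs
begin

lemma S2pt_comp:
  "S2pt th ph $ 1 = sin th * cos ph" "S2pt th ph $ 2 = sin th * sin ph" "S2pt th ph $ 3 = cos th"
  by (simp_all add: S2pt_def)

lemma inner3: "(x::real^3) \<bullet> y = x$1*y$1 + x$2*y$2 + x$3*y$3"
  by (simp add: inner_vec_def sum_3)

lemma norm3sq: "(norm (x::real^3))^2 = (x$1)^2 + (x$2)^2 + (x$3)^2"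
  by (simp only: power2_norm_eq_inner inner3) (simp add: power2_eq_square)

lemma norm_S2pt: "norm (S2pt th ph) = 1"
proof -
  have "(norm (S2pt th ph))^2 = (sin th)^2 * ((cos ph)^2 + (sin ph)^2) + (cos th)^2"
    unfolding norm3sq S2pt_comp power_mult_distrib by algebra
  also have "(cos ph)^2 + (sin ph)^2 = 1" by simp
  finally have "(norm (S2pt th ph))^2 = 1" by simp
  thus ?thesis using norm_ge_zero[of "S2pt th ph"] by (simp add: power2_eq_1_iff)
qed

lemma sin_int_ge: "(0::real) \<le> y \<Longrightarrow> y \<le> 1 \<Longrightarrow> y / 2 \<le> sin y"
proof -
  assume y: "0 \<le> y" "y \<le> 1"
  have a: "\<bar>sin y - (\<Sum>m<3. sin_coeff m * y ^ m)\<bar> \<le> inverse (fact 3) * \<bar>y\<bar> ^ 3"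
    by (rule Maclaurin_sin_bound)
  have s: "(\<Sum>m<3. sin_coeff m * y ^ m) = y"
    by (simp add: sin_coeff_def eval_nat_numeral)
  have b: "\<bar>sin y - y\<bar> \<le> y^3 / 6" using a y unfolding s by (simp add: eval_nat_numeral)
  moreover have "y^3 \<le> y"
  proof -
    have "y*y \<le> 1" using y by (simp add: mult_le_one)
    hence "y*(y*y) \<le> y*1" using y by (intro mult_left_mono) auto
    thus ?thesis by (simp add: eval_nat_numeral)
  qed
  ultimately show ?thesis using y abs_ge_minus_self[of "sin y - y"] by linarith
qed

lemma ang_small:
  fixes y e :: real
  assumes "\<bar>sin y\<bar> \<le> e" "0 < cos y" "-pi \<le> y" "y \<le> pi" "e \<le> 1/2"
  shows "\<bar>y\<bar> \<le> 2*e"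
proof -
  have yl: "y < pi/2"
  proof (rule ccontr)
    assume "\<not> y < pi/2"
    hence "cos y \<le> cos (pi/2)" using assms by (intro cos_monotone_0_pi_le) auto
    thus False using assms by simp
  qed
  have yg: "-(pi/2) < y"
  proof (rule ccontr)
    assume "\<not> -(pi/2) < y"
    hence "cos (-y) \<le> cos (pi/2)" using assms by (intro cos_monotone_0_pi_le) auto
    thus False using assms by simp
  qed
  have main: "z \<le> 2*e" if z: "0 \<le> z" "z < pi/2" "\<bar>sin z\<bar> \<le> e" for z
  proof (cases "z \<le> 1")
    case True
    then show ?thesis using sin_int_ge[of z] z by simp
  next
    case False
    have "sin 1 < sin z" using False z by (intro sin_monotone_2pi) auto
    moreover have "1/2 \<le> sin (1::real)" using sin_int_ge[of 1] by simp
    ultimately show ?thesis using z assms by simp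
  qed
  show ?thesis
  proof (cases "0 \<le> y")
    case True thus ?thesis using main[of y] yl assms by simp
  next
    case False thus ?thesis using main[of "-y"] yg assms by simp
  qed
qed

lemma ang:
  fixes x e :: real
  assumes "\<bar>sin x\<bar> \<le> e" "0 < cos x" "e \<le> 1/2"
  shows "\<exists>k::int. \<bar>x - 2*pi*k\<bar> \<le> 2*e"
proof -
  define k where "k = \<lfloor>(x+pi)/(2*pi)\<rfloor>"
  define y where "y = x - (2*pi) * of_int k"
  have "of_int k \<le> (x+pi)/(2*pi)" "(x+pi)/(2*pi) < of_int k + 1"
    unfolding k_def by linarith+
  hence "(2*pi) * of_int k \<le> x + pi" "x + pi < (2*pi) * (of_int k + 1)"
    by (simp_all add: field_simps)
  hence yb: "-pi \<le> y" "y \<le> pi" unfolding y_def by (simp_all add: algebra_simps)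
  have "sin y = sin x" "cos y = cos x" unfolding y_def by (simp_all add: sin_diff cos_diff)
  hence "\<bar>y\<bar> \<le> 2*e" using ang_small[of y e] assms yb by simp
  thus ?thesis unfolding y_def by (intro exI[of _ k]) (simp add: mult.assoc)
qed

lemma cs2: fixes a1 a2 b1 b2 :: real
  shows "a1*b1 + a2*b2 \<le> sqrt (a1^2+a2^2) * sqrt (b1^2+b2^2)"
proof -
  have "(a1^2+a2^2) * (b1^2+b2^2) - (a1*b1 + a2*b2)^2 = (a1*b2 - a2*b1)^2" by algebra
  hence "(a1*b1 + a2*b2)^2 \<le> (a1^2+a2^2) * (b1^2+b2^2)" by (smt (verit) zero_le_power2)
  hence "sqrt ((a1*b1 + a2*b2)^2) \<le> sqrt ((a1^2+a2^2) * (b1^2+b2^2))" by (rule real_sqrt_le_mono)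
  thus ?thesis by (simp add: real_sqrt_mult)
qed

lemma zbound:
  fixes a1 a2 a3 b1 b2 b3 D r :: real
  assumes a: "a1^2+a2^2+a3^2 = 1" and b: "b1^2+b2^2+b3^2 = 1" and D: "D \<ge> 0"
    "D^2 = (a1-b1)^2+(a2-b2)^2+(a3-b3)^2" and r: "r = sqrt (b1^2+b2^2)"
  shows "\<bar>a3 - b3\<bar> \<le> 4*r*D + 2*D^2"
proof -
  have r0: "r \<ge> 0" using r by simp
  have "(a3-b3)^2 \<le> D^2" using D(2) zero_le_power2[of "a1-b1"] zero_le_power2[of "a2-b2"] by linarith
  hence "\<bar>a3-b3\<bar>^2 \<le> D^2" by (simp only: power2_abs)
  hence d3: "\<bar>a3 - b3\<bar> \<le> D" using D(1) by (rule power2_le_imp_le)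
  show ?thesis
  proof (cases "r \<ge> 1/2")
    case True
    have "D \<le> 2*r*D" using True D by (simp add: mult_right_mono[of 1 "2*r" D, simplified])
    moreover have "0 \<le> 4*r*D" "0 \<le> D^2" using r0 D by simp_all
    ultimately show ?thesis using d3 by linarith
  next
    case False
    have "r^2 = b1^2+b2^2" using r by simp
    hence "b3^2 = 1 - r^2" using b by linarith
    moreover have "r^2 < (1/2)^2" using False r0 by (intro power_strict_mono) auto
    ultimately have "(1/2)^2 < \<bar>b3\<bar>^2" by (simp add: power_divide)
    hence b3: "\<bar>b3\<bar> > 1/2" by (rule power2_less_imp_less) simp
    show ?thesis
    proof (cases "a3 * b3 < 0")
      case True
      hence "(0 < a3 \<and> b3 < 0) \<or> (a3 < 0 \<and> 0 < b3)" by (auto simp: mult_less_0_iff)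
      hence "\<bar>a3 - b3\<bar> \<ge> \<bar>b3\<bar>" by (auto simp: abs_if)
      hence "D > 1/2" using d3 b3 by linarith
      hence "D * 1 \<le> D * (2*D)" using D(1) by (intro mult_left_mono) auto
      hence "D \<le> 2*D^2" by (simp add: power2_eq_square)
      moreover have "0 \<le> 4*r*D" using r0 D by simp
      ultimately show ?thesis using d3 by linarith
    next
      case False
      have "\<not>(a3 > 0 \<and> b3 < 0)" using False mult_pos_neg[of a3 b3] by auto
      moreover have "\<not>(a3 < 0 \<and> b3 > 0)" using False mult_neg_pos[of a3 b3] by auto
      ultimately have "(0 \<le> a3 \<and> 0 \<le> b3) \<or> (a3 \<le> 0 \<and> b3 \<le> 0)" by auto
      hence s: "\<bar>a3 + b3\<bar> > 1/2" using b3 by (auto simp: abs_if split: if_splits)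
      define ra where "ra = sqrt (a1^2+a2^2)"
      have ra0: "ra \<ge> 0" unfolding ra_def by simp
      have "a3^2 = 1 - ra^2" using a unfolding ra_def by simp
      moreover have "b3^2 = 1 - r^2" using b r by simp
      ultimately have "(a3 - b3) * (a3 + b3) = (r - ra) * (r + ra)" by algebra
      hence "\<bar>(a3 - b3) * (a3 + b3)\<bar> = \<bar>(r - ra) * (r + ra)\<bar>" by simp
      hence eq: "\<bar>a3 - b3\<bar> * \<bar>a3 + b3\<bar> = \<bar>r - ra\<bar> * (r + ra)"
        using r0 ra0 by (simp add: abs_mult)
      have "(r - ra)^2 \<le> (a1-b1)^2+(a2-b2)^2"
      proof -
        have "a1*b1 + a2*b2 \<le> ra * r" unfolding ra_def r using cs2 by simp
        moreover have "(r - ra)^2 = r^2 + ra^2 - 2*r*ra" by algebra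
        moreover have "r^2 = b1^2+b2^2" "ra^2 = a1^2+a2^2" unfolding r ra_def by simp_all
        ultimately show ?thesis by (simp add: power2_diff algebra_simps)
      qed
      hence "(r - ra)^2 \<le> D^2" using D(2) zero_le_power2[of "a3-b3"] by linarith
      hence "\<bar>r - ra\<bar>^2 \<le> D^2" by (simp only: power2_abs)
      hence rd: "\<bar>r - ra\<bar> \<le> D" using D(1) by (rule power2_le_imp_le)
      hence "ra \<le> r + D" by simp
      hence "\<bar>r - ra\<bar> * (r + ra) \<le> D * (2*r + D)" using rd r0 ra0 D
        by (intro mult_mono) auto
      hence "\<bar>a3 - b3\<bar> * \<bar>a3 + b3\<bar> \<le> D * (2*r + D)" using eq by simp
      moreover have "\<bar>a3 - b3\<bar> * (1/2) \<le> \<bar>a3 - b3\<bar> * \<bar>a3 + b3\<bar>"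
        using s by (intro mult_left_mono) auto
      hence "\<bar>a3 - b3\<bar> \<le> 2 * (\<bar>a3 - b3\<bar> * \<bar>a3 + b3\<bar>)" by simp
      ultimately have "\<bar>a3 - b3\<bar> \<le> 2 * (D * (2*r + D))"
        by (meson mult_le_cancel_left_pos order_trans zero_less_numeral)
      thus ?thesis by (simp add: algebra_simps power2_eq_square)
    qed
  qed
qed

lemma phi_bound:
  fixes S ph be r d b1 b2 :: real
  assumes S: "S \<ge> 0" and rd: "2*d < r" and d: "0 < d" and b: "b1 = r * cos be" "b2 = r * sin be"
    and h: "(S * cos ph - b1)^2 + (S * sin ph - b2)^2 \<le> d^2"
  shows "\<bar>sin (ph - be)\<bar> \<le> d / r" "0 < cos (ph - be)"
proof -
  have r: "r > 0" using rd d by linarith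
  have rs: "r * sin (ph - be) = (b1 - S * cos ph) * sin ph - (b2 - S * sin ph) * cos ph"
    unfolding b sin_diff by algebra
  have id: "((b1 - S * cos ph) * sin ph - (b2 - S * sin ph) * cos ph)^2
      + ((b1 - S * cos ph) * cos ph + (b2 - S * sin ph) * sin ph)^2
      = ((S * cos ph - b1)^2 + (S * sin ph - b2)^2) * ((sin ph)^2 + (cos ph)^2)" by algebra
  have one: "(sin ph)^2 + (cos ph)^2 = 1" by simp
  have "(r * sin (ph - be))^2 = ((b1 - S * cos ph) * sin ph - (b2 - S * sin ph) * cos ph)^2"
    by (simp only: rs)
  moreover have "((b1 - S * cos ph) * sin ph - (b2 - S * sin ph) * cos ph)^2
      + ((b1 - S * cos ph) * cos ph + (b2 - S * sin ph) * sin ph)^2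
      = (S * cos ph - b1)^2 + (S * sin ph - b2)^2" using id unfolding one by simp
  ultimately have "(r * sin (ph - be))^2 \<le> d^2"
    using h zero_le_power2[of "(b1 - S * cos ph) * cos ph + (b2 - S * sin ph) * sin ph"]
    by linarith
  hence "\<bar>r * sin (ph - be)\<bar>^2 \<le> d^2" by (simp only: power2_abs)
  hence "\<bar>r * sin (ph - be)\<bar> \<le> d" by (rule power2_le_imp_le[OF _ less_imp_le[OF d]])
  hence "r * \<bar>sin (ph - be)\<bar> \<le> d" using r by (simp add: abs_mult)
  thus "\<bar>sin (ph - be)\<bar> \<le> d / r" using r by (simp add: field_simps)
  have rc: "r * cos (ph - be) = b1 * cos ph + b2 * sin ph" unfolding b cos_diff by algebra
  have rr: "b1^2 + b2^2 = r^2" unfolding b by (simp add: power_mult_distrib flip: distrib_left)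
  have "(S * cos ph - b1)^2 + (S * sin ph - b2)^2 = S^2 - 2*S*(b1 * cos ph + b2 * sin ph) + (b1^2+b2^2)"
  proof -
    have "(S * cos ph - b1)^2 + (S * sin ph - b2)^2 = S^2 * ((sin ph)^2 + (cos ph)^2) - 2*S*(b1 * cos ph + b2 * sin ph) + (b1^2+b2^2)"
      by algebra
    thus ?thesis by simp
  qed
  hence e: "S^2 - 2*S*(r * cos (ph - be)) + r^2 \<le> d^2" using h rc rr by simp
  have "d^2 < r^2" using rd d by (intro power_strict_mono) auto
  hence "0 < S * (r * cos (ph - be))" using e S zero_le_power2[of S] by linarith
  thus "0 < cos (ph - be)" using S r by (simp add: zero_less_mult_iff)
qed

definition Jset :: "real \<Rightarrow> real \<Rightarrow> real set" where
  "Jset be e = {be - 2*pi - 2*e .. be - 2*pi + 2*e} \<union> {be - 2*e .. be + 2*e} \<union> {be + 2*pi - 2*e .. be + 2*pi + 2*e}"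

lemma Jset_mem:
  fixes ph be e :: real
  assumes "\<bar>sin (ph - be)\<bar> \<le> e" "0 < cos (ph - be)" "e < 1/2"
    "0 \<le> ph" "ph \<le> 2*pi" "0 \<le> be" "be \<le> 2*pi"
  shows "ph \<in> Jset be e"
proof -
  obtain k :: int where k: "\<bar>ph - be - 2*pi*k\<bar> \<le> 2*e" using ang[of "ph - be" e] assms by auto
  have "2*pi*k \<le> 2*pi + 1" using k assms by linarith
  moreover have "2*pi + 1 < 2*pi*2" using pi_gt3 by simp
  ultimately have "2*pi*k < 2*pi*2" by linarith
  moreover have "(2*pi*k < 2*pi*2) = (real_of_int k < 2)" by (rule mult_less_cancel_left_pos) simp
  ultimately have "real_of_int k < 2" by blast
  hence k1: "k \<le> 1" by linarith
  have "2*pi*k \<ge> -2*pi - 1" using k assms by linarith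
  moreover have "-2*pi - 1 > 2*pi*(-2)" using pi_gt3 by simp
  ultimately have "2*pi*(-2) < 2*pi*k" by linarith
  moreover have "(2*pi*(-2) < 2*pi*k) = (-2 < real_of_int k)" by (rule mult_less_cancel_left_pos) simp
  ultimately have "real_of_int k > -2" by blast
  hence k2: "k \<ge> -1" by linarith
  have "k = -1 \<or> k = 0 \<or> k = 1" using k1 k2 by linarith
  thus ?thesis using k unfolding Jset_def by (auto simp: abs_le_iff)
qed

lemma Jset_measure:
  assumes "e \<ge> 0" shows "emeasure lborel (Jset be e) \<le> ennreal (12 * e)"
proof -
  define A where "A = {be - 2*pi - 2*e .. be - 2*pi + 2*e}"
  define B where "B = {be - 2*e .. be + 2*e}"
  define C where "C = {be + 2*pi - 2*e .. be + 2*pi + 2*e}"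
  have 1: "emeasure lborel (A \<union> B \<union> C) \<le> emeasure lborel (A \<union> B) + emeasure lborel C"
    by (rule emeasure_subadditive) (auto simp: A_def B_def C_def)
  have 2: "emeasure lborel (A \<union> B) \<le> emeasure lborel A + emeasure lborel B"
    by (rule emeasure_subadditive) (auto simp: A_def B_def)
  have "emeasure lborel (Jset be e) \<le> emeasure lborel A + emeasure lborel B + emeasure lborel C"
    unfolding Jset_def A_def[symmetric] B_def[symmetric] C_def[symmetric]
    using 1 2 by (meson add_right_mono order_trans)
  also have "\<dots> = ennreal (4*e) + ennreal (4*e) + ennreal (4*e)" using assms by (simp add: A_def B_def C_def)
  also have "\<dots> = ennreal (12*e)" using assms by (simp flip: ennreal_plus)
  finally show ?thesis .
qed

lemma Jset_borel[measurable]: "Jset be e \<in> sets borel"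
  unfolding Jset_def by simp

definition clampv :: "real \<Rightarrow> real" where "clampv x = max (-1) (min 1 x)"
definition Iset :: "real \<Rightarrow> real \<Rightarrow> real set" where
  "Iset c h = {arccos (clampv (c + h)) .. arccos (clampv (c - h))}"
definition rho :: "real^3 \<Rightarrow> real" where "rho e = sqrt ((e$1)^2 + (e$2)^2)"
definition Jfull :: "real \<Rightarrow> real \<Rightarrow> real \<Rightarrow> real set" where
  "Jfull r be d = (if 2*d < r then Jset be (d/r) else {0..2*pi})"
definition hh :: "real \<Rightarrow> real \<Rightarrow> real" where "hh r d = 4*r*d + 2*d^2"

lemma Iset_borel[measurable]: "Iset c h \<in> sets borel" unfolding Iset_def by simp
lemma Jfull_borel[measurable]: "Jfull r be d \<in> sets borel" unfolding Jfull_def by simp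

lemma clampv_bounds: "-1 \<le> clampv x" "clampv x \<le> 1" unfolding clampv_def by auto

lemma Iset_mem:
  assumes "0 \<le> th" "th \<le> pi" "\<bar>cos th - c\<bar> \<le> h"
  shows "th \<in> Iset c h"
proof -
  have "cos th \<le> clampv (c + h)" using assms cos_le_one[of th] unfolding clampv_def by (auto simp: max_def min_def abs_le_iff)
  hence "arccos (clampv (c + h)) \<le> arccos (cos th)"
    using clampv_bounds by (intro arccos_le_arccos) auto
  moreover have "clampv (c - h) \<le> cos th" using assms cos_ge_minus_one[of th] unfolding clampv_def by (auto simp: max_def min_def abs_le_iff)
  hence "arccos (cos th) \<le> arccos (clampv (c - h))"
    using clampv_bounds by (intro arccos_le_arccos) auto
  ultimately show ?thesis using arccos_cos[OF assms(1,2)] unfolding Iset_def by simp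
qed

lemma cap_point:
  fixes e :: "real^3"
  assumes e: "norm e = 1" and be: "e$1 = rho e * cos be" "e$2 = rho e * sin be" "0 \<le> be" "be \<le> 2*pi"
    and th: "0 \<le> th" "th \<le> pi" and ph: "0 \<le> ph" "ph \<le> 2*pi" and d: "0 < d"
    and D: "norm (S2pt th ph - e) \<le> d"
  shows "th \<in> Iset (e$3) (hh (rho e) d)" "ph \<in> Jfull (rho e) be d"
proof -
  define D where "D = norm (S2pt th ph - e)"
  have D0: "D \<ge> 0" unfolding D_def by simp
  have Dd: "D \<le> d" using D unfolding D_def by simp
  have D2: "D^2 = (sin th * cos ph - e$1)^2 + (sin th * sin ph - e$2)^2 + (cos th - e$3)^2"
    unfolding D_def norm3sq by (simp add: S2pt_comp)
  have a: "(sin th * cos ph)^2 + (sin th * sin ph)^2 + (cos th)^2 = 1"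
    using norm3sq[of "S2pt th ph"] norm_S2pt[of th ph] by (simp add: S2pt_comp)
  have b: "(e$1)^2 + (e$2)^2 + (e$3)^2 = 1"
    using e unfolding norm3sq[symmetric] by simp
  have r0: "rho e \<ge> 0" unfolding rho_def by simp
  have "\<bar>cos th - e$3\<bar> \<le> 4 * rho e * D + 2 * D^2"
    by (rule zbound[OF a b D0 D2]) (simp add: rho_def)
  also have "\<dots> \<le> 4 * rho e * d + 2 * d^2"
    using D0 Dd r0 by (intro add_mono mult_left_mono power_mono) auto
  finally show "th \<in> Iset (e$3) (hh (rho e) d)" unfolding hh_def using th by (intro Iset_mem) auto
  show "ph \<in> Jfull (rho e) be d"
  proof (cases "2*d < rho e")
    case True
    have S: "sin th \<ge> 0" using th by (simp add: sin_ge_zero)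
    have "(sin th * cos ph - e$1)^2 + (sin th * sin ph - e$2)^2 \<le> D^2"
      using D2 zero_le_power2[of "cos th - e$3"] by linarith
    also have "\<dots> \<le> d^2" using D0 Dd by (intro power_mono) auto
    finally have h: "(sin th * cos ph - e$1)^2 + (sin th * sin ph - e$2)^2 \<le> d^2" .
    note pb = phi_bound[OF S True d be(1,2) h]
    have "d / rho e < 1/2" using True d by (simp add: field_simps)
    hence "ph \<in> Jset be (d / rho e)" using pb ph be by (intro Jset_mem) auto
    thus ?thesis using True unfolding Jfull_def by simp
  next
    case False thus ?thesis using ph unfolding Jfull_def by simp
  qed
qed

lemma Iset_integral:
  assumes h: "0 \<le> h" and L: "0 \<le> L"
  shows "(\<integral>\<^sup>+th. ennreal (L * sin th) * indicator (Iset c h) th \<partial>lborel) \<le> ennreal (L * (2*h))"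
proof -
  define a where "a = arccos (clampv (c + h))"
  define b where "b = arccos (clampv (c - h))"
  have cl: "clampv (c - h) \<le> clampv (c + h)" using h unfolding clampv_def by auto
  have ab: "a \<le> b" unfolding a_def b_def using cl clampv_bounds by (intro arccos_le_arccos) auto
  have a0: "0 \<le> a" unfolding a_def using clampv_bounds by (intro arccos_lbound) auto
  have bpi: "b \<le> pi" unfolding b_def using clampv_bounds by (intro arccos_ubound) auto
  have meas: "(\<lambda>x. L * sin x) \<in> borel_measurable borel"
    by (intro borel_measurable_continuous_onI continuous_intros)
  have "(\<integral>\<^sup>+th. ennreal (L * sin th) * indicator {a..b} th \<partial>lborel) = ennreal ((- L * cos b) - (- L * cos a))"
  proof (rule nn_integral_FTC_Icc[OF meas _ _ ab])
    fix x assume "x \<in> {a..b}"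
    show "((\<lambda>x. - L * cos x) has_real_derivative L * sin x) (at x)"
      by (auto intro!: derivative_eq_intros)
    show "0 \<le> L * sin x" using \<open>x \<in> {a..b}\<close> a0 bpi L by (intro mult_nonneg_nonneg sin_ge_zero) auto
  qed
  also have "(- L * cos b) - (- L * cos a) = L * (clampv (c + h) - clampv (c - h))"
    unfolding a_def b_def using clampv_bounds by (simp add: algebra_simps)
  also have "clampv (c + h) - clampv (c - h) \<le> 2*h" unfolding clampv_def using h by (auto simp: max_def min_def)
  hence "ennreal (L * (clampv (c + h) - clampv (c - h))) \<le> ennreal (L * (2*h))"
    using L by (intro ennreal_leI mult_left_mono) auto
  finally show ?thesis unfolding Iset_def a_def b_def .
qed

lemma prod_bound:
  assumes h: "0 \<le> h" and L: "0 \<le> L" and J: "J \<in> sets borel"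
  shows "(\<integral>\<^sup>+th. \<integral>\<^sup>+ph. ennreal (L * sin th) * indicator (Iset c h) th * indicator J ph \<partial>lborel \<partial>lborel)
     \<le> ennreal (L * (2*h)) * emeasure lborel J"
proof -
  have "(\<integral>\<^sup>+th. \<integral>\<^sup>+ph. ennreal (L * sin th) * indicator (Iset c h) th * indicator J ph \<partial>lborel \<partial>lborel)
     = (\<integral>\<^sup>+th. ennreal (L * sin th) * indicator (Iset c h) th * emeasure lborel J \<partial>lborel)"
    using J by (subst nn_integral_cmult_indicator) auto
  also have "\<dots> = (\<integral>\<^sup>+th. ennreal (L * sin th) * indicator (Iset c h) th \<partial>lborel) * emeasure lborel J"
    by (rule nn_integral_multc) measurable
  also have "\<dots> \<le> ennreal (L * (2*h)) * emeasure lborel J"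
    using Iset_integral[OF h L] by (intro mult_right_mono) auto
  finally show ?thesis .
qed

lemma cap_bound:
  assumes d: "0 < d" and r: "0 \<le> r"
  shows "ennreal (2 * hh r d) * emeasure lborel (Jfull r be d) \<le> ennreal (160 * d^2)"
proof (cases "2*d < r")
  case True
  have rp: "0 < r" using True d by linarith
  have "0 \<le> d / r" using d rp by simp
  from Jset_measure[OF this, of be]
  have "emeasure lborel (Jfull r be d) \<le> ennreal (12 * (d / r))"
    using True unfolding Jfull_def by simp
  hence "ennreal (2 * hh r d) * emeasure lborel (Jfull r be d) \<le> ennreal (2 * hh r d) * ennreal (12 * (d / r))"
    by (rule mult_left_mono) simp
  also have "\<dots> = ennreal (2 * hh r d * (12 * (d / r)))"
    using d rp by (intro ennreal_mult[symmetric]) (auto simp: hh_def)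
  also have "2 * hh r d * (12 * (d / r)) = 96 * d^2 + 48 * d^2 * (d / r)"
    using rp by (simp add: hh_def field_simps power2_eq_square)
  also have "\<dots> \<le> 96 * d^2 + 48 * d^2 * (1/2)"
    using True rp d by (intro add_left_mono mult_left_mono) (auto simp: field_simps)
  also have "\<dots> \<le> 160 * d^2" by simp
  finally show ?thesis by (simp add: ennreal_leI)
next
  case False
  have "emeasure lborel (Jfull r be d) = ennreal (2*pi)"
    using False unfolding Jfull_def by simp
  moreover have "ennreal (2 * hh r d) * ennreal (2*pi) = ennreal (2 * hh r d * (2*pi))"
    using d r by (intro ennreal_mult[symmetric]) (auto simp: hh_def)
  ultimately have "ennreal (2 * hh r d) * emeasure lborel (Jfull r be d) = ennreal (2 * hh r d * (2*pi))"
    by simp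
  moreover have "2 * hh r d * (2*pi) \<le> 160 * d^2"
  proof -
    have "2 * hh r d * (2*pi) \<le> 2 * (4 * (2*d) * d + 2 * d^2) * (2*pi)"
      unfolding hh_def using False d r by (intro mult_right_mono mult_left_mono add_right_mono) auto
    also have "\<dots> = 40 * pi * d^2" by (simp add: power2_eq_square)
    also have "\<dots> \<le> 40 * 4 * d^2" using pi_less_4 by (intro mult_right_mono) auto
    finally show ?thesis by simp
  qed
  ultimately show ?thesis by (simp add: ennreal_leI)
qed

lemma half_sq: "((1/2::real)^k)^2 = (1/4)^k"
proof -
  have "((1/2::real)^k)^2 = (1/2)^(k*2)" by (rule power_mult[symmetric])
  also have "\<dots> = ((1/2)^2)^k" by (simp only: mult.commute[of k 2] power_mult)
  also have "\<dots> = (1/4)^k" by (simp add: power_divide)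
  finally show ?thesis .
qed

definition dl :: "nat \<Rightarrow> real" where "dl k = 2 * (1/2)^k"
definition cc :: "real \<Rightarrow> nat \<Rightarrow> real" where "cc s k = (4 powr s)^(k+1)"
definition tt :: "real \<Rightarrow> nat \<Rightarrow> real" where "tt s k = cc s k * (160 * (dl k)^2)"

lemma pow_powr: "0 < (x::real) \<Longrightarrow> (x^n) powr a = (x powr a)^n"
  by (simp add: powr_power powr_powr mult.commute flip: powr_realpow)

lemma cc_eq: "((1/4::real)^(k+1)) powr (-s) = cc s k"
proof -
  have "((1/4::real)^(k+1)) powr (-s) = ((1/4) powr (-s))^(k+1)" by (rule pow_powr) simp
  also have "(1/4::real) powr (-s) = 4 powr s"
    by (simp add: powr_minus_divide powr_divide)
  finally show ?thesis unfolding cc_def .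
qed

lemma tt_eq: "tt s k = 640 * 4 powr s * (4 powr s / 4)^k"
proof -
  have dl2: "(dl k)^2 = 4 * (1/4)^k" unfolding dl_def power_mult_distrib half_sq by simp
  have e2: "(4 powr s)^k * (1/4::real)^k = (4 powr s / 4)^k" by (simp add: power_divide)
  have "tt s k = 640 * 4 powr s * ((4 powr s)^k * (1/4)^k)" unfolding tt_def cc_def dl2
    by (simp add: algebra_simps)
  thus ?thesis unfolding e2 .
qed

lemma tt_summable: "s < 1 \<Longrightarrow> summable (tt s)"
proof -
  assume s: "s < 1"
  have "4 powr s < (4::real) powr 1" using s by (intro powr_less_mono) auto
  hence "4 powr s / 4 < (1::real)" by simp
  moreover have "0 \<le> 4 powr s / (4::real)" by simp
  ultimately have q: "norm (4 powr s / 4 :: real) < 1" by simp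
  show ?thesis unfolding tt_eq[abs_def] by (intro summable_mult summable_geometric q)
qed

lemma tt_nonneg: "0 \<le> tt s k" unfolding tt_def cc_def by simp

lemma dyadic:
  assumes s: "0 < s" and W: "0 < W" and D: "0 \<le> D" "D \<le> 2" "D^2 / 2 \<le> W"
  shows "\<exists>k. D \<le> dl k \<and> W powr (-s) \<le> cc s k"
proof -
  define P where "P n \<longleftrightarrow> 2 * (1/4::real)^(n+1) < W" for n
  obtain n where n: "(1/4::real)^n < W/2" using real_arch_pow_inv[of "W/2" "1/4"] W by auto
  have "(1/4::real)^(n+1) \<le> (1/4)^n" by (rule power_decreasing) auto
  hence "P n" unfolding P_def using n by linarith
  define k where "k = (LEAST n. P n)"
  have Pk: "P k" unfolding k_def by (rule LeastI) fact
  have "W powr (-s) \<le> (2 * (1/4::real)^(k+1)) powr (-s)"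
    using Pk s unfolding P_def by (intro powr_mono2') auto
  also have "\<dots> \<le> ((1/4::real)^(k+1)) powr (-s)"
    using s by (intro powr_mono2') auto
  also have "\<dots> = cc s k" by (rule cc_eq)
  finally have c: "W powr (-s) \<le> cc s k" .
  have "D \<le> dl k"
  proof (cases k)
    case 0 thus ?thesis using D by (simp add: dl_def)
  next
    case (Suc j)
    have "\<not> P j" unfolding k_def Suc by (rule not_less_Least) (simp add: k_def[symmetric] Suc)
    hence "W \<le> 2 * (1/4)^k" unfolding P_def Suc by simp
    hence "D^2 \<le> 4 * (1/4)^k" using D by simp
    also have "4 * (1/4::real)^k = (dl k)^2" unfolding dl_def power_mult_distrib half_sq by simp
    finally show ?thesis by (rule power2_le_imp_le) (simp add: dl_def)
  qed
  thus ?thesis using c by blast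
qed

lemma obtain_be:
  fixes e :: "real^3"
  obtains be where "e$1 = rho e * cos be" "e$2 = rho e * sin be" "0 \<le> be" "be \<le> 2*pi"
proof (cases "rho e = 0")
  case True
  hence "(e$1)^2 + (e$2)^2 = 0" unfolding rho_def by simp
  hence "e$1 = 0" "e$2 = 0" by (simp_all add: sum_power2_eq_zero_iff)
  thus ?thesis using that[of 0] True by simp
next
  case False
  have "0 \<le> rho e" unfolding rho_def by simp
  hence r0: "rho e > 0" using False by linarith
  have rr: "(rho e)^2 = (e$1)^2 + (e$2)^2" unfolding rho_def by simp
  have "(e$1 / rho e)^2 + (e$2 / rho e)^2 = ((e$1)^2 + (e$2)^2) / (rho e)^2"
    by (simp add: power_divide add_divide_distrib)
  also have "\<dots> = 1" unfolding rr[symmetric] using r0 by simp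
  finally have "(e$1 / rho e)^2 + (e$2 / rho e)^2 = 1" .
  then obtain t where t: "0 \<le> t" "t < 2*pi" "e$1 / rho e = cos t" "e$2 / rho e = sin t"
    by (rule sincos_total_2pi)
  show ?thesis using that[of t] t r0 by (simp add: field_simps)
qed

lemma norm_diff_sq_unit:
  fixes w e :: "real^3"
  assumes "norm w = 1" "norm e = 1"
  shows "(norm (w - e))^2 = 2 * (1 - e \<bullet> w)"
proof -
  have "(norm (w - e))^2 = w \<bullet> w - 2 * (e \<bullet> w) + e \<bullet> e"
    by (simp add: power2_norm_eq_inner inner_diff_left inner_diff_right inner_commute)
  moreover have "w \<bullet> w = 1" "e \<bullet> e = 1" using assms by (simp_all flip: power2_norm_eq_inner)
  ultimately show ?thesis by simp
qed

lemma K0: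
  fixes e :: "real^3"
  assumes s: "0 < s" "s < 1" and e: "norm e = 1" and tau: "0 \<le> tau" and L: "0 \<le> L"
  shows "sphere_nn_integral (\<lambda>w. L * (max (1 - e \<bullet> w) tau) powr (-s)) \<le> ennreal (L * suminf (tt s))"
proof -
  obtain be where be: "e$1 = rho e * cos be" "e$2 = rho e * sin be" "0 \<le> be" "be \<le> 2*pi"
    by (rule obtain_be)
  define I where "I k = Iset (e$3) (hh (rho e) (dl k))" for k
  define J where "J k = Jfull (rho e) be (dl k)" for k
  define P where "P k th ph = ennreal (L * cc s k * sin th) * indicator (I k) th * indicator (J k) ph" for k th ph
  define G where "G k th = ennreal (L * cc s k * sin th) * indicator (I k) th * emeasure lborel (J k)" for k th
  have r0: "0 \<le> rho e" unfolding rho_def by simp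
  have dl0: "0 < dl k" for k unfolding dl_def by simp
  have pw: "ennreal (L * (max (1 - e \<bullet> S2pt th ph) tau) powr (-s) * sin th) * indicator {0..pi} th
      * indicator {0..2*pi} ph \<le> (\<Sum>k. P k th ph)" for th ph
  proof (cases "th \<in> {0..pi} \<and> ph \<in> {0..2*pi}")
    case False thus ?thesis by (auto simp: indicator_def)
  next
    case True
    define w where "w = S2pt th ph"
    define D where "D = norm (w - e)"
    define W where "W = max (1 - e \<bullet> w) tau"
    have nw: "norm w = 1" unfolding w_def by (rule norm_S2pt)
    have D2: "D^2 = 2 * (1 - e \<bullet> w)" unfolding D_def by (rule norm_diff_sq_unit[OF nw e])
    have D0: "0 \<le> D" unfolding D_def by simp
    have Dle: "D \<le> 2" unfolding D_def using norm_triangle_ineq4[of w e] nw e by simp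
    have "1 - e \<bullet> w \<le> W" unfolding W_def by simp
    hence DW: "D^2 / 2 \<le> W" using D2 by simp
    show ?thesis
    proof (cases "W = 0")
      case True thus ?thesis unfolding W_def w_def by simp
    next
      case False
      have "0 \<le> W" using DW zero_le_power2[of D] by linarith
      hence Wp: "0 < W" using False by simp
      obtain k where k: "D \<le> dl k" "W powr (-s) \<le> cc s k"
        using dyadic[OF s(1) Wp D0 Dle DW] by blast
      have th: "0 \<le> th" "th \<le> pi" and ph: "0 \<le> ph" "ph \<le> 2*pi" using True by auto
      have Dd: "norm (S2pt th ph - e) \<le> dl k" using k D_def w_def by simp
      note cp = cap_point[OF e be th ph dl0 Dd]
      have sn: "0 \<le> sin th" using th by (simp add: sin_ge_zero)
      have "ennreal (L * W powr (-s) * sin th) * indicator {0..pi} th * indicator {0..2*pi} ph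
          = ennreal (L * W powr (-s) * sin th)" using True by simp
      also have "\<dots> \<le> ennreal (L * cc s k * sin th)"
        using k L sn by (intro ennreal_leI mult_right_mono mult_left_mono) auto
      also have "\<dots> = P k th ph" unfolding P_def I_def J_def using cp by simp
      also have "\<dots> \<le> (\<Sum>k. P k th ph)"
        using sum_le_suminf[of "\<lambda>k. P k th ph" "{k}"] by simp
      finally show ?thesis unfolding W_def w_def .
    qed
  qed
  have Pm: "P k th \<in> borel_measurable lborel" for k th unfolding P_def J_def by measurable
  have inner: "(\<integral>\<^sup>+ph. P k th ph \<partial>lborel) = G k th" for k th
    unfolding P_def G_def J_def by (subst nn_integral_cmult_indicator) auto
  have Gm: "G k \<in> borel_measurable lborel" for k unfolding G_def I_def by measurable
  have Gb: "(\<integral>\<^sup>+th. G k th \<partial>lborel) \<le> ennreal (L * tt s k)" for k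
  proof -
    have cc0: "0 \<le> cc s k" unfolding cc_def by simp
    have h0: "0 \<le> hh (rho e) (dl k)" unfolding hh_def using r0 dl0[of k] by simp
    have "(\<integral>\<^sup>+th. G k th \<partial>lborel) = (\<integral>\<^sup>+th. \<integral>\<^sup>+ph. P k th ph \<partial>lborel \<partial>lborel)"
      using inner by simp
    also have "\<dots> \<le> ennreal ((L * cc s k) * (2 * hh (rho e) (dl k))) * emeasure lborel (J k)"
      unfolding P_def I_def J_def using L cc0 h0 by (intro prod_bound) auto
    also have "\<dots> = ennreal (L * cc s k) * (ennreal (2 * hh (rho e) (dl k)) * emeasure lborel (J k))"
      using L cc0 h0 by (simp add: ennreal_mult mult.assoc)
    also have "\<dots> \<le> ennreal (L * cc s k) * ennreal (160 * (dl k)^2)"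
      unfolding J_def by (intro mult_left_mono cap_bound dl0 r0) auto
    also have "\<dots> = ennreal (L * tt s k)"
      using L cc0 by (simp add: ennreal_mult tt_def mult.assoc)
    finally show ?thesis .
  qed
  have "sphere_nn_integral (\<lambda>w. L * (max (1 - e \<bullet> w) tau) powr (-s))
      \<le> (\<integral>\<^sup>+th. \<integral>\<^sup>+ph. (\<Sum>k. P k th ph) \<partial>lborel \<partial>lborel)"
    unfolding sphere_nn_integral_def by (intro nn_integral_mono pw)
  also have "\<dots> = (\<integral>\<^sup>+th. (\<Sum>k. G k th) \<partial>lborel)"
    by (simp add: nn_integral_suminf[OF Pm] inner)
  also have "\<dots> = (\<Sum>k. \<integral>\<^sup>+th. G k th \<partial>lborel)"
    by (rule nn_integral_suminf[OF Gm])
  also have "\<dots> \<le> (\<Sum>k. ennreal (L * tt s k))"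
    by (intro suminf_le Gb) auto
  also have "\<dots> = ennreal (\<Sum>k. L * tt s k)"
    using tt_summable[OF s(2)] L tt_nonneg by (intro suminf_ennreal2 summable_mult) auto
  also have "(\<Sum>k. L * tt s k) = L * suminf (tt s)"
    using tt_summable[OF s(2)] by (rule suminf_mult)
  finally show ?thesis .
qed

lemma SI_mono:
  assumes "\<And>w. norm w = 1 \<Longrightarrow> f w \<le> g w"
  shows "sphere_nn_integral f \<le> sphere_nn_integral g"
  unfolding sphere_nn_integral_def
proof (intro nn_integral_mono)
  fix th ph :: real
  show "ennreal (f (S2pt th ph) * sin th) * indicator {0..pi} th * indicator {0..2*pi} ph
     \<le> ennreal (g (S2pt th ph) * sin th) * indicator {0..pi} th * indicator {0..2*pi} ph"
  proof (cases "th \<in> {0..pi}")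
    case True
    have "0 \<le> sin th" using True by (simp add: sin_ge_zero)
    hence "f (S2pt th ph) * sin th \<le> g (S2pt th ph) * sin th"
      using assms[OF norm_S2pt] by (intro mult_right_mono) auto
    hence "ennreal (f (S2pt th ph) * sin th) \<le> ennreal (g (S2pt th ph) * sin th)" by (rule ennreal_leI)
    thus ?thesis by (intro mult_right_mono) auto
  qed simp
qed

lemma SI_const:
  assumes c: "0 \<le> c"
  shows "sphere_nn_integral (\<lambda>_. c) = ennreal (4 * pi * c)"
proof -
  have meas: "(\<lambda>x. c * sin x) \<in> borel_measurable borel"
    by (intro borel_measurable_continuous_onI continuous_intros)
  have i1: "(\<integral>\<^sup>+th. ennreal (c * sin th) * indicator {0..pi} th \<partial>lborel) = ennreal ((- c * cos pi) - (- c * cos 0))"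
  proof (rule nn_integral_FTC_Icc[OF meas])
    fix x :: real assume x: "x \<in> {0..pi}"
    show "((\<lambda>x. - c * cos x) has_real_derivative c * sin x) (at x)"
      by (auto intro!: derivative_eq_intros)
    show "0 \<le> c * sin x" using x c by (intro mult_nonneg_nonneg sin_ge_zero) auto
  qed simp
  have "sphere_nn_integral (\<lambda>_. c)
     = (\<integral>\<^sup>+th. ennreal (c * sin th) * indicator {0..pi} th * emeasure lborel {0..2*pi} \<partial>lborel)"
    unfolding sphere_nn_integral_def by (subst nn_integral_cmult_indicator) auto
  also have "\<dots> = (\<integral>\<^sup>+th. ennreal (c * sin th) * indicator {0..pi} th \<partial>lborel) * emeasure lborel {0..2*pi}"
    by (rule nn_integral_multc) measurable
  also have "\<dots> = ennreal (2 * c) * ennreal (2 * pi)" unfolding i1 by simp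
  also have "\<dots> = ennreal (4 * pi * c)" using c by (simp add: ennreal_mult[symmetric] mult_ac)
  finally show ?thesis .
qed

lemma SI_zero:
  assumes "\<And>w. norm w = 1 \<Longrightarrow> f w \<le> 0"
  shows "sphere_nn_integral f = 0"
proof -
  have "sphere_nn_integral f \<le> sphere_nn_integral (\<lambda>_. 0)" by (rule SI_mono) (use assms in auto)
  also have "\<dots> = 0" using SI_const[of 0] by simp
  finally show ?thesis by simp
qed

lemma geo:
  fixes x0 w :: "real^3"
  assumes w: "norm w = 1" and rt: "0 \<le> rt" and u: "norm x0 \<le> u"
  shows "\<bar>norm x0 - rt\<bar> \<le> norm (x0 + rt *\<^sub>R w)" "norm (x0 + rt *\<^sub>R w) \<le> norm x0 + rt"
proof -
  have n: "norm (rt *\<^sub>R w) = rt" using w rt by simp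
  show "norm (x0 + rt *\<^sub>R w) \<le> norm x0 + rt" using norm_triangle_ineq[of x0 "rt *\<^sub>R w"] n by simp
  have "norm x0 - rt \<le> norm (x0 + rt *\<^sub>R w)"
    using norm_triangle_ineq4[of "x0 + rt *\<^sub>R w" "rt *\<^sub>R w"] n by simp
  moreover have "rt - norm x0 \<le> norm (x0 + rt *\<^sub>R w)"
    using norm_triangle_ineq4[of "rt *\<^sub>R w" "- x0"] norm_triangle_ineq[of "x0 + rt *\<^sub>R w" "- x0"] n
    by (simp add: algebra_simps)
  ultimately show "\<bar>norm x0 - rt\<bar> \<le> norm (x0 + rt *\<^sub>R w)" by simp
qed

lemma main_neg:
  fixes x0 :: "real^3"
  assumes g: "gam \<le> 0" and t0: "t0 \<ge> 0" "t0 + norm x0 \<le> R" "0 \<le> rt" "rt \<le> t0"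
  shows "sphere_nn_integral (\<lambda>w. (R - (t0 - rt) - norm (x0 + rt *\<^sub>R w)) powr (-gam))
     \<le> ennreal ((4*pi*4 powr (-gam)) * (R - (t0 - rt)) powr gam * (R - t0) powr (-gam)
                * ((R - t0 - norm x0) + rt) powr (-gam))"
proof -
  define u where "u = R - t0"
  define r0 where "r0 = norm x0"
  define v where "v = (R - t0 - norm x0) + rt"
  define a where "a = R - (t0 - rt)"
  define Q where "Q = 4 powr (-gam) * a powr gam * u powr (-gam) * v powr (-gam)"
  have ur0: "r0 \<le> u" "0 \<le> r0" using t0 unfolding u_def r0_def by auto
  have av: "a = u + rt" "v = u - r0 + rt" unfolding a_def u_def v_def r0_def by auto
  have pw: "(a - norm (x0 + rt *\<^sub>R w)) powr (-gam) \<le> Q" if w: "norm w = 1" for w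
  proof -
    define r where "r = norm (x0 + rt *\<^sub>R w)"
    have rb: "\<bar>r0 - rt\<bar> \<le> r" "r \<le> r0 + rt" using geo[OF w t0(3) ur0(1)[unfolded r0_def]]
      unfolding r_def r0_def by auto
    define X where "X = a - r"
    have X0: "0 \<le> X" unfolding X_def using rb av ur0 by linarith
    show ?thesis
    proof (cases "X = 0")
      case True thus ?thesis unfolding Q_def X_def r_def by simp
    next
      case False
      hence Xp: "0 < X" using X0 by simp
      have up: "0 < u"
      proof (rule ccontr)
        assume "\<not> 0 < u" hence "u = 0" "r0 = 0" using ur0 by auto
        thus False using Xp rb av unfolding X_def by linarith
      qed
      have vp: "0 < v"
      proof (rule ccontr)
        assume "\<not> 0 < v" hence "rt = 0" "u = r0" using ur0 av t0 by auto
        thus False using Xp rb av unfolding X_def by linarith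
      qed
      have ap: "0 < a" using av up t0 by linarith
      have key: "a * X \<le> (2*u) * (2 * v)"
      proof (cases "r0 \<le> rt")
        case True
        have "X \<le> 2*u" unfolding X_def using rb av ur0 True by linarith
        moreover have "a \<le> 2 * v" using av ur0 True by linarith
        ultimately have "a * X \<le> (2 * v) * (2*u)" using ap X0 by (intro mult_mono) auto
        thus ?thesis by (simp add: mult_ac)
      next
        case False
        have "X \<le> 2 * v" unfolding X_def using rb av ur0 False by linarith
        moreover have "a \<le> 2*u" using av ur0 False by linarith
        ultimately show ?thesis using ap X0 up by (intro mult_mono) auto
      qed
      have "X powr (-gam) = (a * X) powr (-gam) * a powr gam"
      proof -
        have "a powr (-gam) * a powr gam = 1" using ap by (simp flip: powr_add)
        thus ?thesis by (simp add: powr_mult mult_ac)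
      qed
      also have "\<dots> \<le> ((2*u) * (2 * v)) powr (-gam) * a powr gam"
        using key g ap X0 by (intro mult_right_mono powr_mono2) auto
      also have "\<dots> = Q" unfolding Q_def by (simp add: powr_mult mult_ac)
      finally show ?thesis unfolding X_def r_def .
    qed
  qed
  have Q0: "0 \<le> Q" unfolding Q_def by simp
  have "sphere_nn_integral (\<lambda>w. (R - (t0 - rt) - norm (x0 + rt *\<^sub>R w)) powr (-gam))
      \<le> sphere_nn_integral (\<lambda>_. Q)" unfolding a_def[symmetric] by (rule SI_mono) (rule pw)
  also have "\<dots> = ennreal (4 * pi * Q)" by (rule SI_const[OF Q0])
  also have "4 * pi * Q = (4*pi*4 powr (-gam)) * (R - (t0 - rt)) powr gam * (R - t0) powr (-gam)
                * ((R - t0 - norm x0) + rt) powr (-gam)"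
    unfolding Q_def a_def u_def v_def by (simp add: mult_ac)
  finally show ?thesis .
qed

lemma obtain_dir:
  fixes x0 :: "real^3"
  obtains e where "norm e = 1" "x0 = norm x0 *\<^sub>R e"
proof (cases "x0 = 0")
  case True
  show ?thesis using that[of "axis 1 1"] True by simp
next
  case False
  show ?thesis using that[of "sgn x0"] False by (simp add: norm_sgn sgn_div_norm)
qed

lemma norm_sq_comb:
  fixes e w :: "real^3"
  assumes "norm e = 1" "norm w = 1"
  shows "(norm (r0 *\<^sub>R e + rt *\<^sub>R w))^2 = r0^2 + 2 * rt * r0 * (e \<bullet> w) + rt^2"
proof -
  have "e \<bullet> e = 1" "w \<bullet> w = 1" using assms by (simp_all flip: power2_norm_eq_inner)
  have "(norm (r0 *\<^sub>R e + rt *\<^sub>R w))^2 = (r0 *\<^sub>R e + rt *\<^sub>R w) \<bullet> (r0 *\<^sub>R e + rt *\<^sub>R w)"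
    by (rule power2_norm_eq_inner)
  also have "\<dots> = r0^2 * (e \<bullet> e) + 2 * rt * r0 * (e \<bullet> w) + rt^2 * (w \<bullet> w)"
    by (simp add: inner_add_left inner_add_right inner_commute[of w e] power2_eq_square algebra_simps)
  finally show ?thesis using \<open>e \<bullet> e = 1\<close> \<open>w \<bullet> w = 1\<close> by simp
qed

lemma main_pos:
  fixes x0 :: "real^3"
  assumes s: "0 < s" "s < 1" and t0: "t0 \<ge> 0" "t0 + norm x0 \<le> R" "0 \<le> rt" "rt \<le> t0"
  shows "sphere_nn_integral (\<lambda>w. (R - (t0 - rt) - norm (x0 + rt *\<^sub>R w)) powr (-s))
     \<le> ennreal ((4 powr s * max (4*pi) (suminf (tt s))) * (R - (t0 - rt)) powr s * (R - t0) powr (-s)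
                * ((R - t0 - norm x0) + rt) powr (-s))"
proof -
  define u where "u = R - t0"
  define r0 where "r0 = norm x0"
  define v where "v = (R - t0 - norm x0) + rt"
  define a where "a = R - (t0 - rt)"
  define K where "K = suminf (tt s)"
  define K2 where "K2 = max (4*pi) K"
  have Knn: "0 \<le> K" unfolding K_def using tt_summable[OF s(2)] tt_nonneg by (intro suminf_nonneg) auto
  have K2: "4*pi \<le> K2" "K \<le> K2" "0 \<le> K2" unfolding K2_def using pi_gt_zero Knn by (auto simp: le_max_iff_disj)
  have ur0: "r0 \<le> u" "0 \<le> r0" using t0 unfolding u_def r0_def by auto
  have av: "a = u + rt" "v = u - r0 + rt" unfolding a_def u_def v_def r0_def by auto
  define F where "F w = (a - norm (x0 + rt *\<^sub>R w)) powr (-s)" for w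
  have rb: "\<bar>r0 - rt\<bar> \<le> norm (x0 + rt *\<^sub>R w)" "norm (x0 + rt *\<^sub>R w) \<le> r0 + rt"
    if w: "norm w = 1" for w
    using geo[OF w t0(3) ur0(1)[unfolded r0_def]] unfolding r0_def by auto
  have RHS0: "0 \<le> (4 powr s * K2) * a powr s * u powr (-s) * v powr (-s)" using K2 by simp
  have goal: "sphere_nn_integral F \<le> ennreal ((4 powr s * K2) * a powr s * u powr (-s) * v powr (-s))"
  proof (cases "u = 0 \<or> v = 0")
    case True
    have "sphere_nn_integral F = 0"
    proof (rule SI_zero)
      fix w :: "real^3" assume w: "norm w = 1"
      have "a - norm (x0 + rt *\<^sub>R w) = 0"
        using True rb[OF w] av ur0 t0 by (auto simp: abs_if split: if_splits)
      thus "F w \<le> 0" unfolding F_def by simp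
    qed
    thus ?thesis by simp
  next
    case False
    have up: "0 < u" using False ur0 by auto
    have vp: "0 < v" using False ur0 av t0 by auto
    have ap: "0 < a" using av up t0 by linarith
    obtain e :: "real^3" where e: "norm e = 1" "x0 = r0 *\<^sub>R e"
      unfolding r0_def by (rule obtain_dir)
    define c where "c = u^2 - r0^2 + 2 * rt * (u - r0)"
    define d where "d = 2 * rt * r0"
    have d0: "0 \<le> d" unfolding d_def using t0 ur0 by simp
    have c0: "0 \<le> c"
    proof -
      have "r0^2 \<le> u^2" using ur0 by (intro power_mono) auto
      moreover have "0 \<le> rt * (u - r0)" using t0 ur0 by simp
      ultimately show ?thesis unfolding c_def by linarith
    qed
    have cd: "u * v \<le> c + d"
    proof -
      have "c + d - u * v = r0 * (u - r0) + rt * u"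
        unfolding c_def d_def av by (simp add: algebra_simps power2_eq_square)
      moreover have "0 \<le> r0 * (u - r0)" "0 \<le> rt * u" using ur0 t0 up by auto
      ultimately show ?thesis by linarith
    qed
    have uvp: "0 < u * v" using up vp by simp
    define Z where "Z = (2*a) powr s * ((c + d)/2) powr (-s)"
    have pw: "F w \<le> (2*a) powr s * (c + d * (1 - e \<bullet> w)) powr (-s)
              \<and> 0 \<le> 1 - e \<bullet> w" if w: "norm w = 1" for w
    proof -
      define r where "r = norm (x0 + rt *\<^sub>R w)"
      define X where "X = a - r"
      define Y where "Y = c + d * (1 - e \<bullet> w)"
      have ew: "\<bar>e \<bullet> w\<bar> \<le> 1" using Cauchy_Schwarz_ineq2[of e w] e w by simp
      have r0': "0 \<le> r" unfolding r_def by simp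
      have X0: "0 \<le> X" unfolding X_def r_def using rb[OF w] av ur0 by linarith
      have rsq: "r^2 = r0^2 + 2 * rt * r0 * (e \<bullet> w) + rt^2"
        unfolding r_def using norm_sq_comb[OF e(1) w, of r0 rt] e(2) by simp
      have XY: "X * (a + r) = Y"
        unfolding X_def Y_def c_def d_def av
        by (simp add: algebra_simps power2_eq_square) (use rsq in \<open>simp add: algebra_simps power2_eq_square\<close>)
      show ?thesis
      proof (cases "X = 0")
        case True thus ?thesis unfolding F_def X_def r_def using ew by simp
      next
        case False
        hence Xp: "0 < X" using X0 by simp
        have arp: "0 < a + r" using ap r0' by simp
        have Yp: "0 < Y" using XY Xp arp by (metis mult_pos_pos)
        have ar2: "a + r \<le> 2*a" using Xp unfolding X_def by simp
        have "Y / (2*a) \<le> X"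
        proof -
          have "Y \<le> X * (2*a)" unfolding XY[symmetric] using X0 ar2 by (intro mult_left_mono) auto
          thus ?thesis using ap by (simp add: divide_le_eq)
        qed
        hence "X powr (-s) \<le> (Y / (2*a)) powr (-s)"
          using s Yp ap by (intro powr_mono2') auto
        also have "(Y / (2*a)) powr (-s) = (2*a) powr s * Y powr (-s)"
        proof -
          have "(Y / (2*a)) powr (-s) = inverse (Y powr s / (2*a) powr s)" by (simp only: powr_minus powr_divide)
          also have "\<dots> = (2*a) powr s / Y powr s" by (rule inverse_divide)
          also have "\<dots> = (2*a) powr s * Y powr (-s)" by (simp only: powr_minus divide_inverse)
          finally show ?thesis .
        qed
        finally show ?thesis unfolding F_def X_def r_def Y_def using ew by simp
      qed
    qed
    have "sphere_nn_integral F \<le> ennreal (K2 * Z)"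
    proof (cases "d \<le> c")
      case True
      have cp: "0 < c" using True cd uvp by linarith
      define Q1 where "Q1 = (2*a) powr s * c powr (-s)"
      have "sphere_nn_integral F \<le> sphere_nn_integral (\<lambda>_. Q1)"
      proof (rule SI_mono)
        fix w :: "real^3" assume w: "norm w = 1"
        have "(c + d * (1 - e \<bullet> w)) powr (-s) \<le> c powr (-s)"
          using pw[OF w] d0 cp s by (intro powr_mono2') auto
        thus "F w \<le> Q1" unfolding Q1_def using pw[OF w]
          by (meson mult_left_mono order_trans powr_ge_zero)
      qed
      also have "\<dots> = ennreal (4*pi*Q1)" by (rule SI_const) (simp add: Q1_def)
      also have "4*pi*Q1 \<le> K2 * Z"
      proof -
        have "c powr (-s) \<le> ((c + d)/2) powr (-s)"
          using True cd uvp s by (intro powr_mono2') auto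
        hence "Q1 \<le> Z" unfolding Q1_def Z_def by (intro mult_left_mono) auto
        thus ?thesis using K2 by (intro mult_mono) (auto simp: Q1_def)
      qed
      finally show ?thesis by (simp add: ennreal_leI)
    next
      case False
      have dp: "0 < d" using False c0 by linarith
      define L where "L = (2*a) powr s * d powr (-s)"
      have "sphere_nn_integral F \<le> sphere_nn_integral (\<lambda>w. L * (max (1 - e \<bullet> w) (c/d)) powr (-s))"
      proof (rule SI_mono)
        fix w :: "real^3" assume w: "norm w = 1"
        define M where "M = max (1 - e \<bullet> w) (c/d)"
        have Y: "d * M \<le> c + d * (1 - e \<bullet> w)"
          unfolding M_def using dp c0 pw[OF w] by (auto simp: max_def)
        show "F w \<le> L * (max (1 - e \<bullet> w) (c/d)) powr (-s)"
        proof (cases "M = 0")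
          case True
          hence "c = 0" "1 - e \<bullet> w = 0" unfolding M_def using dp c0 pw[OF w]
            by (auto simp: max_def split: if_splits)
          thus ?thesis using pw[OF w] by simp
        next
          case False
          have "0 \<le> M" unfolding M_def using pw[OF w] by (simp add: le_max_iff_disj)
          hence Mp: "0 < M" using False by linarith
          have "(c + d * (1 - e \<bullet> w)) powr (-s) \<le> (d * M) powr (-s)"
            using Y s dp Mp by (intro powr_mono2') auto
          also have "\<dots> = d powr (-s) * M powr (-s)" by (rule powr_mult)
          finally have "(2*a) powr s * (c + d * (1 - e \<bullet> w)) powr (-s) \<le> L * M powr (-s)"
            unfolding L_def by (simp add: mult.assoc mult_left_mono)
          thus ?thesis using pw[OF w] unfolding M_def by linarith
        qed
      qed
      also have "\<dots> \<le> ennreal (L * K)" unfolding K_def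
        using c0 dp by (intro K0 s e(1)) (auto simp: L_def)
      also have "L * K \<le> K2 * Z"
      proof -
        have "d powr (-s) \<le> ((c + d)/2) powr (-s)"
          using False cd uvp s by (intro powr_mono2') auto
        hence "L \<le> Z" unfolding L_def Z_def by (intro mult_left_mono) auto
        moreover have "0 \<le> L" unfolding L_def by simp
        ultimately have "K * L \<le> K2 * Z" using K2 by (intro mult_mono) auto
        thus ?thesis by (simp add: mult.commute)
      qed
      finally show ?thesis by (simp add: ennreal_leI)
    qed
    also have "K2 * Z \<le> (4 powr s * K2) * a powr s * u powr (-s) * v powr (-s)"
    proof -
      have "((c + d)/2) powr (-s) \<le> (u * v / 2) powr (-s)"
        using cd uvp s by (intro powr_mono2') auto
      hence "Z \<le> (2*a) powr s * (u * v / 2) powr (-s)" unfolding Z_def by (intro mult_left_mono) auto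
      also have "\<dots> = 4 powr s * a powr s * u powr (-s) * v powr (-s)"
      proof -
        have "(2*a) powr s = 2 powr s * a powr s" by (rule powr_mult)
        moreover have "(u * v / 2) powr (-s) = u powr (-s) * v powr (-s) * 2 powr s"
        proof -
          have "(u * v / 2) powr (-s) = inverse ((u * v) powr s / 2 powr s)" by (simp only: powr_minus powr_divide)
          also have "\<dots> = 2 powr s / (u * v) powr s" by (rule inverse_divide)
          also have "\<dots> = 2 powr s * (inverse (u powr s) * inverse (v powr s))"
            by (simp only: powr_mult divide_inverse inverse_mult_distrib)
          also have "\<dots> = u powr (-s) * v powr (-s) * 2 powr s" by (simp add: powr_minus mult_ac)
          finally show ?thesis .
        qed
        moreover have "(4::real) powr s = 2 powr s * 2 powr s" using powr_mult[of 2 2 s] by simp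
        ultimately show ?thesis by (simp add: mult_ac)
      qed
      finally have "K2 * Z \<le> K2 * (4 powr s * a powr s * u powr (-s) * v powr (-s))"
        using K2 by (intro mult_left_mono) auto
      thus ?thesis by (simp add: mult_ac)
    qed
    finally show ?thesis by (simp add: ennreal_leI)
  qed
  show ?thesis using goal unfolding F_def a_def u_def v_def K2_def K_def .
qed

theorem lemma5p1:
  fixes R \<gamma> :: real
  assumes "R > 1" and "\<gamma> < 1"
  shows "\<exists>C::real. \<forall>(t0::real) (x0::real^3) (rt::real).
           t0 \<ge> 0 \<and> t0 + norm x0 \<le> R \<and> 0 \<le> rt \<and> rt \<le> t0 \<longrightarrow>
           sphere_nn_integral
             (\<lambda>\<omega>. (R - (t0 - rt) - norm (x0 + rt *\<^sub>R \<omega>)) powr (- \<gamma>))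
           \<le> ennreal (C * (R - (t0 - rt)) powr \<gamma> * (R - t0) powr (- \<gamma>)
                       * ((R - t0 - norm x0) + rt) powr (- \<gamma>))"
proof (cases "\<gamma> \<le> 0")
  case True
  show ?thesis
  proof (intro exI[of _ "4*pi*4 powr (-\<gamma>)"] allI impI)
    fix t0 rt :: real and x0 :: "real^3"
    assume h: "t0 \<ge> 0 \<and> t0 + norm x0 \<le> R \<and> 0 \<le> rt \<and> rt \<le> t0"
    show "sphere_nn_integral
             (\<lambda>\<omega>. (R - (t0 - rt) - norm (x0 + rt *\<^sub>R \<omega>)) powr (- \<gamma>))
           \<le> ennreal ((4*pi*4 powr (-\<gamma>)) * (R - (t0 - rt)) powr \<gamma> * (R - t0) powr (- \<gamma>)
                       * ((R - t0 - norm x0) + rt) powr (- \<gamma>))"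
      using h by (intro main_neg[OF True]) auto
  qed
next
  case False
  hence s: "0 < \<gamma>" by simp
  show ?thesis
  proof (intro exI[of _ "4 powr \<gamma> * max (4*pi) (suminf (tt \<gamma>))"] allI impI)
    fix t0 rt :: real and x0 :: "real^3"
    assume h: "t0 \<ge> 0 \<and> t0 + norm x0 \<le> R \<and> 0 \<le> rt \<and> rt \<le> t0"
    show "sphere_nn_integral
             (\<lambda>\<omega>. (R - (t0 - rt) - norm (x0 + rt *\<^sub>R \<omega>)) powr (- \<gamma>))
           \<le> ennreal ((4 powr \<gamma> * max (4*pi) (suminf (tt \<gamma>))) * (R - (t0 - rt)) powr \<gamma> * (R - t0) powr (- \<gamma>)
                       * ((R - t0 - norm x0) + rt) powr (- \<gamma>))"
      using h by (intro main_pos[OF s assms(2)]) auto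
  qed
qed

end
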